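(* In the discrete single-buyer game with known total value $V$, there exists a mechanism for the seller which obtains total revenue at least $V/e-O(1)$ (the $O(1)$ being a constant independent of $T$ and of the buyer's values), when the buyer follows a dominant strategy.
   Context: Discrete single-buyer game: $T$ rounds, one divisible item per round; the buyer has value $v_t\in[0,1]$ for the round-$t$ item, arbitrary and unknown to the seller except that the total $V=\sum_t v_t$ is known to the seller. The buyer is limited-liability: in each round it cannot pay more than its value for the fraction of the item it receives. The seller may pay a reimbursement at the end; revenue is total payments minus reimbursements. A dominant strategy for the buyer is a utility-maximizing strategy (utility = value received minus payments plus reimbursement). *)

theory Defs
  imports Complex_Main
begin

text \<open>
  Discrete single-buyer game with T rounds (indexed 0, ..., T-1).
  A (deterministic, history-dependent) mechanism lets the buyer send a message
  (a real number) in every round; given the round t, the list of previous messages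
  and the current message it determines the fraction of the round-t item allocated
  to the buyer and the buyer's payment in that round.  At the end the seller pays a
  reimbursement that depends on the whole message history.
\<close>

record mechanism =
  alloc :: "nat \<Rightarrow> real list \<Rightarrow> real \<Rightarrow> real"
  pay   :: "nat \<Rightarrow> real list \<Rightarrow> real \<Rightarrow> real"
  reimb :: "real list \<Rightarrow> real"

definition well_formed :: "mechanism \<Rightarrow> bool" where
  "well_formed M \<longleftrightarrow>
     (\<forall>t h m. 0 \<le> alloc M t h m \<and> alloc M t h m \<le> 1 \<and> 0 \<le> pay M t h m)
     \<and> (\<forall>h. 0 \<le> reimb M h)"

definition q_at :: "mechanism \<Rightarrow> real list \<Rightarrow> nat \<Rightarrow> real" where
  "q_at M ms t = alloc M t (take t ms) (ms ! t)"

definition p_at :: "mechanism \<Rightarrow> real list \<Rightarrow> nat \<Rightarrow> real" where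
  "p_at M ms t = pay M t (take t ms) (ms ! t)"

definition feasible :: "mechanism \<Rightarrow> nat \<Rightarrow> (nat \<Rightarrow> real) \<Rightarrow> real list \<Rightarrow> bool" where
  "feasible M T v ms \<longleftrightarrow> length ms = T \<and> (\<forall>t<T. p_at M ms t \<le> v t * q_at M ms t)"

definition utility :: "mechanism \<Rightarrow> nat \<Rightarrow> (nat \<Rightarrow> real) \<Rightarrow> real list \<Rightarrow> real" where
  "utility M T v ms = (\<Sum>t<T. v t * q_at M ms t - p_at M ms t) + reimb M ms"

definition revenue :: "mechanism \<Rightarrow> nat \<Rightarrow> real list \<Rightarrow> real" where
  "revenue M T ms = (\<Sum>t<T. p_at M ms t) - reimb M ms"

text \<open>Dominant strategy = utility-maximizing strategy among all limited-liability
  feasible strategies (the buyer knows its values; the mechanism is deterministic, so a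
  strategy is a message sequence).\<close>
definition dominant :: "mechanism \<Rightarrow> nat \<Rightarrow> (nat \<Rightarrow> real) \<Rightarrow> real list \<Rightarrow> bool" where
  "dominant M T v ms \<longleftrightarrow> feasible M T v ms \<and>
     (\<forall>ms'. feasible M T v ms' \<longrightarrow> utility M T v ms' \<le> utility M T v ms)"

end

theory Submission
  imports Defs
begin

definition rr :: "real \<Rightarrow> real" where "rr m = max 0 m"

definition phi :: "real \<Rightarrow> real \<Rightarrow> real" where
  "phi V x = (if x \<le> V - V / exp 1 then (V / exp 1) / (V - x) else 1)"

definition Psi :: "real \<Rightarrow> real \<Rightarrow> real" where
  "Psi V x = (if x \<le> V - V / exp 1 then V / exp 1 * ln (V / (V - x)) - (V / exp 1) / (V - x)
              else V / exp 1 + (x - (V - V / exp 1)) - 2)"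

lemma K_pos: "(V::real) > 0 \<Longrightarrow> V / exp 1 > 0" by (metis divide_pos_pos exp_gt_zero)

lemma K_lt: "(V::real) > 0 \<Longrightarrow> V / exp 1 < V"
proof -
  assume V: "V > 0"
  have "V * 1 < V * exp 1"
    by (rule mult_strict_left_mono) (use V in auto)
  then show ?thesis by (simp add: divide_less_eq)
qed

lemma phi_reg1: "x \<le> V - V / exp 1 \<Longrightarrow> phi V x = (V / exp 1) / (V - x)"
  unfolding phi_def by simp

lemma phi_reg2: "\<not> x \<le> V - V / exp 1 \<Longrightarrow> phi V x = 1"
  unfolding phi_def by simp

lemma phi_pos: assumes "V > 0" shows "0 < phi V x"
proof (cases "x \<le> V - V / exp 1")
  case True
  then show ?thesis using K_pos[OF assms] by (simp only: phi_reg1) (rule divide_pos_pos; linarith)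
qed (simp add: phi_reg2)

lemma phi_le1: assumes "V > 0" shows "phi V x \<le> 1"
proof (cases "x \<le> V - V / exp 1")
  case True
  then show ?thesis using K_pos[OF assms] by (simp only: phi_reg1) (subst divide_le_eq_1; linarith)
qed (simp add: phi_reg2)

lemma phi_mono: assumes "V > 0" "x \<le> y" shows "phi V x \<le> phi V y"
proof -
  have K: "V / exp 1 > 0" using K_pos assms by blast
  show ?thesis
  proof (cases "y \<le> V - V / exp 1")
    case True
    then have "x \<le> V - V / exp 1" using assms by linarith
    moreover have "V - y \<le> V - x" using assms by linarith
    moreover have "V - y > 0" using True K by linarith
    ultimately show ?thesis using True K
      by (simp only: phi_reg1) (intro divide_left_mono; simp add: mult_pos_pos)
  next
    case False
    then show ?thesis using phi_le1[OF assms(1), of x] by (simp add: phi_reg2)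
  qed
qed

lemma phi_bound: assumes "V > 0" "x \<le> V" shows "phi V x * (V - x) \<le> V / exp 1"
proof (cases "x \<le> V - V / exp 1")
  case True
  have "V - x > 0" using True K_pos[OF assms(1)] by linarith
  then show ?thesis using True by (simp add: phi_def)
next
  case False
  then show ?thesis using assms by (simp add: phi_def)
qed

lemma Psi_step:
  assumes V: "V > 0" and a: "0 \<le> a" and d: "0 \<le> d" "d \<le> 1" and ad: "a + d \<le> V"
  shows "Psi V (a + d) - Psi V a \<le> d * phi V a"
proof -
  define K where "K = V / exp 1"
  have K: "K > 0" "K < V" using K_pos[OF V] K_lt[OF V] by (auto simp: K_def)
  have lnK: "ln (V / K) = 1" using V by (simp add: K_def)
  show ?thesis
  proof (cases "a + d \<le> V - K")
    case True
    define u where "u = V - a"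
    define w where "w = V - (a + d)"
    have w: "w \<ge> K" using True by (simp add: w_def)
    have wp: "w > 0" using w K by linarith
    have uw: "u = w + d" by (simp add: u_def w_def)
    have up: "u > 0" using wp d uw by linarith
    have a1: "a \<le> V - K" using True d by linarith
    have "ln (V / w) - ln (V / u) = ln (u / w)"
      using V up wp by (simp add: ln_div)
    also have "\<dots> \<le> u / w - 1" using up wp by (intro ln_le_minus_one) simp
    also have "u / w - 1 = d / w" using wp uw by (simp add: field_simps)
    finally have L: "ln (V / w) - ln (V / u) \<le> d / w" .
    have "Psi V (a + d) - Psi V a = K * (ln (V / w) - ln (V / u)) - K / w + K / u"
      using True a1 by (simp add: Psi_def K_def u_def w_def algebra_simps)
    also have "\<dots> \<le> K * (d / w) - K / w + K / u"
      using L K by (simp add: mult_left_mono del: times_divide_eq_right)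
    also have "K * (d / w) - K / w = K * (d - 1) * (1 / w)" using wp by (simp add: field_simps)
    also have "\<dots> \<le> K * (d - 1) * (1 / u)"
    proof (rule mult_left_mono_neg)
      show "1 / u \<le> 1 / w" using up wp uw d by (simp add: frac_le)
      show "K * (d - 1) \<le> 0" using K d by (simp add: mult_nonneg_nonpos)
    qed
    also have "K * (d - 1) * (1 / u) + K / u = d * phi V a"
    proof -
      have "phi V a = K / u" unfolding K_def u_def by (rule phi_reg1[OF a1[unfolded K_def]])
      then show ?thesis using up by (simp add: field_simps)
    qed
    finally show ?thesis by simp
  next
    case False
    show ?thesis
    proof (cases "a \<le> V - K")
      case True
      define u where "u = V - a"
      define e where "e = u - K"
      have e: "0 \<le> e" "e \<le> d" using True False by (auto simp: e_def u_def)
      have up: "u > 0" using K e by (simp add: e_def)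
      have "Psi V (a + d) - Psi V a = (K - K * ln (V / u)) + (a + d - (V - K)) - 2 + K / u"
        using True False by (simp add: Psi_def K_def u_def)
      also have "K - K * ln (V / u) = K * ln (u / K)"
      proof -
        have "ln (u / K) = ln (V / K) - ln (V / u)" using V up K by (simp add: ln_div)
        then have "ln (V / u) + ln (u / K) = 1" using lnK by simp
        then have "K * (ln (V / u) + ln (u / K)) = K" by simp
        then show ?thesis by (simp add: algebra_simps)
      qed
      also have "K * ln (u / K) \<le> K * (u / K - 1)"
        using up K by (intro mult_left_mono ln_le_minus_one) auto
      also have "K * (u / K - 1) = e" using K by (simp add: e_def field_simps)
      also have "a + d - (V - K) \<le> 1" using d(2) True by linarith
      finally have 1: "Psi V (a + d) - Psi V a \<le> e + 1 - 2 + K / u" by linarith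
      have "e - 1 \<le> d - 1" using e by simp
      also have "d - 1 \<le> (d - 1) * (K / u)"
      proof -
        have "K / u \<le> 1" using e up by (simp add: e_def)
        have "(d - 1) * 1 \<le> (d - 1) * (K / u)"
          by (rule mult_left_mono_neg) (use \<open>K / u \<le> 1\<close> d in auto)
        then show ?thesis by simp
      qed
      finally have h2: "e - 1 \<le> (d - 1) * (K / u)" .
      have 2: "e - 1 + K / u \<le> d * (K / u)" using h2 by (simp only: left_diff_distrib)
      have "phi V a = K / u" unfolding K_def u_def by (rule phi_reg1[OF True[unfolded K_def]])
      then show ?thesis using 1 2 by simp
    next
      case F2: False
      then show ?thesis using False by (simp add: Psi_def phi_def K_def)
    qed
  qed
qed

lemma Psi_0: "V > 0 \<Longrightarrow> Psi V 0 = - 1 / exp 1"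
  using K_lt[of V] by (simp add: Psi_def)

lemma Psi_V: assumes "V > 0" shows "Psi V V = 2 * (V / exp 1) - 2"
proof -
  have "\<not> V \<le> V - V / exp 1" using K_pos[OF assms] by linarith
  then show ?thesis unfolding Psi_def by simp
qed

lemma tele:
  assumes "\<forall>t<n. Psi V (S (Suc t)) - Psi V (S t) \<le> f t"
  shows "Psi V (S n) - Psi V (S 0) \<le> (\<Sum>t<n. f t)"
  using assms
proof (induction n)
  case 0 then show ?case by simp
next
  case (Suc n) then show ?case by (simp add: algebra_simps) (smt (verit) lessI less_SucI)
qed


definition mech :: "real \<Rightarrow> mechanism" where
  "mech V = \<lparr>alloc = (\<lambda>t h m. max 0 (min 1 (phi V (sum_list (map rr h))))),
             pay = (\<lambda>t h m. rr m * max 0 (min 1 (phi V (sum_list (map rr h))))),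
             reimb = (\<lambda>h. if sum_list (map rr h) = V then max 0 (V / exp 1) + 1 else 0)\<rparr>"

lemma wf_mech: "well_formed (mech V)"
  unfolding well_formed_def mech_def by (auto simp: rr_def)

lemma sum_list_map_nth: "sum_list (map f xs) = (\<Sum>s<length xs. f (xs ! s))"
  by (simp add: sum_list_sum_nth atLeast0LessThan)

lemma sum_take: "t \<le> length ms \<Longrightarrow> sum_list (map rr (take t ms)) = (\<Sum>s<t. rr (ms ! s))"
  by (simp add: sum_list_map_nth min_def)

lemma q_at_eq: "V > 0 \<Longrightarrow> t < length ms \<Longrightarrow> q_at (mech V) ms t = phi V (\<Sum>s<t. rr (ms ! s))"
  unfolding q_at_def mech_def using phi_pos[of V] phi_le1[of V]
  by (simp add: sum_take less_imp_le)

lemma p_at_eq: "p_at (mech V) ms t = rr (ms ! t) * q_at (mech V) ms t"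
  unfolding q_at_def p_at_def mech_def by simp

lemma reimb_eq: "reimb (mech V) ms =
    (if (\<Sum>s<length ms. rr (ms ! s)) = V then max 0 (V / exp 1) + 1 else 0)"
  unfolding mech_def by (simp add: sum_list_map_nth)

lemma feas_le:
  assumes V: "V > 0" and f: "feasible (mech V) T v ms" and t: "t < T"
  shows "rr (ms ! t) \<le> v t"
proof -
  have len: "length ms = T" using f by (simp add: feasible_def)
  have "p_at (mech V) ms t \<le> v t * q_at (mech V) ms t" using f t by (simp add: feasible_def)
  then have "rr (ms ! t) * q_at (mech V) ms t \<le> v t * q_at (mech V) ms t" by (simp add: p_at_eq)
  moreover have "q_at (mech V) ms t > 0" using q_at_eq[OF V] phi_pos[OF V] t len by simp
  ultimately show ?thesis by (rule mult_right_le_imp_le)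
qed

lemma util_bound:
  assumes V: "V > 0" and sv: "(\<Sum>t<T. v t) = V" and f: "feasible (mech V) T v ms"
  defines "R \<equiv> (\<Sum>s<T. rr (ms ! s))"
  shows "utility (mech V) T v ms \<le> phi V R * (V - R) + reimb (mech V) ms" and "R \<le> V"
proof -
  have len: "length ms = T" using f by (simp add: feasible_def)
  have le: "\<And>t. t < T \<Longrightarrow> rr (ms ! t) \<le> v t" using feas_le[OF V f] by blast
  show "R \<le> V" unfolding R_def sv[symmetric] by (rule sum_mono) (use le in auto)
  have rr0: "\<And>x. 0 \<le> rr x" by (simp add: rr_def)
  have "(\<Sum>t<T. v t * q_at (mech V) ms t - p_at (mech V) ms t)
      = (\<Sum>t<T. (v t - rr (ms ! t)) * phi V (\<Sum>s<t. rr (ms ! s)))"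
    by (rule sum.cong) (auto simp: p_at_eq q_at_eq[OF V] len algebra_simps)
  also have "\<dots> \<le> (\<Sum>t<T. (v t - rr (ms ! t)) * phi V R)"
  proof (rule sum_mono)
    fix t assume t: "t \<in> {..<T}"
    have "(\<Sum>s<t. rr (ms ! s)) \<le> R" unfolding R_def
      by (rule sum_mono2) (use t rr0 in auto)
    then have "phi V (\<Sum>s<t. rr (ms ! s)) \<le> phi V R" by (rule phi_mono[OF V])
    moreover have "0 \<le> v t - rr (ms ! t)" using le t by simp
    ultimately show "(v t - rr (ms ! t)) * phi V (\<Sum>s<t. rr (ms ! s)) \<le> (v t - rr (ms ! t)) * phi V R"
      by (rule mult_left_mono)
  qed
  also have "\<dots> = phi V R * (V - R)"
    by (simp add: sum_distrib_right[symmetric] sum_subtractf sv R_def mult.commute)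
  finally show "utility (mech V) T v ms \<le> phi V R * (V - R) + reimb (mech V) ms"
    unfolding utility_def by simp
qed

lemma util_le:
  assumes V: "V > 0" and sv: "(\<Sum>t<T. v t) = V" and f: "feasible (mech V) T v ms"
  shows "utility (mech V) T v ms \<le> V / exp 1 + 1"
    and "utility (mech V) T v ms \<ge> V / exp 1 + 1 \<Longrightarrow> (\<Sum>s<T. rr (ms ! s)) = V"
proof -
  define R where "R = (\<Sum>s<T. rr (ms ! s))"
  have len: "length ms = T" using f by (simp add: feasible_def)
  have u: "utility (mech V) T v ms \<le> phi V R * (V - R) + reimb (mech V) ms" and RV: "R \<le> V"
    using util_bound[OF V sv f] unfolding R_def by auto
  have K: "V / exp 1 > 0" using K_pos[OF V] .
  have pb: "phi V R * (V - R) \<le> V / exp 1" using phi_bound[OF V RV] .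
  show "utility (mech V) T v ms \<le> V / exp 1 + 1"
  proof (cases "R = V")
    case True
    then show ?thesis using u K by (simp add: reimb_eq len R_def[symmetric])
  next
    case False
    then show ?thesis using u K pb by (simp add: reimb_eq len R_def[symmetric])
  qed
  assume h: "utility (mech V) T v ms \<ge> V / exp 1 + 1"
  show "R = V"
  proof (rule ccontr)
    assume "R \<noteq> V"
    then show False using u h pb by (simp add: reimb_eq len R_def[symmetric])
  qed
qed

lemma main_pos:
  assumes V: "V > 0" and v: "\<forall>t<T. 0 \<le> v t \<and> v t \<le> 1" and sv: "(\<Sum>t<T. v t) = V"
  shows "(\<exists>ms. dominant (mech V) T v ms) \<and>
         (\<forall>ms. dominant (mech V) T v ms \<longrightarrow> revenue (mech V) T ms \<ge> V / exp 1 - 3)"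
proof -
  define ms0 where "ms0 = map v [0..<T]"
  have len0: "length ms0 = T" by (simp add: ms0_def)
  have nth0: "\<And>t. t < T \<Longrightarrow> rr (ms0 ! t) = v t" using v by (simp add: ms0_def rr_def)
  have f0: "feasible (mech V) T v ms0"
    unfolding feasible_def using len0 nth0 by (simp add: p_at_eq)
  have R0: "(\<Sum>s<T. rr (ms0 ! s)) = V" using nth0 sv by simp
  have u0: "utility (mech V) T v ms0 = V / exp 1 + 1"
  proof -
    have "(\<Sum>t<T. v t * q_at (mech V) ms0 t - p_at (mech V) ms0 t) = 0"
      by (rule sum.neutral) (simp add: p_at_eq nth0)
    then show ?thesis using R0 K_pos[OF V] by (simp add: utility_def reimb_eq len0)
  qed
  have d0: "dominant (mech V) T v ms0"
    unfolding dominant_def using f0 u0 util_le(1)[OF V sv] by simp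
  have rev: "revenue (mech V) T ms \<ge> V / exp 1 - 3" if d: "dominant (mech V) T v ms" for ms
  proof -
    have f: "feasible (mech V) T v ms" using d by (simp add: dominant_def)
    have len: "length ms = T" using f by (simp add: feasible_def)
    have "utility (mech V) T v ms \<ge> V / exp 1 + 1" using d f0 u0 by (auto simp: dominant_def)
    then have R: "(\<Sum>s<T. rr (ms ! s)) = V" using util_le(2)[OF V sv f] by simp
    have le: "\<And>t. t < T \<Longrightarrow> rr (ms ! t) \<le> v t" using feas_le[OF V f] by blast
    have "(\<Sum>t<T. v t - rr (ms ! t)) = 0" using R sv by (simp add: sum_subtractf)
    moreover have "\<forall>t\<in>{..<T}. 0 \<le> v t - rr (ms ! t)" using le by simp
    ultimately have "\<forall>t\<in>{..<T}. v t - rr (ms ! t) = 0"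
      using sum_nonneg_eq_0_iff[of "{..<T}" "\<lambda>t. v t - rr (ms ! t)"] by simp
    then have eq: "\<And>t. t < T \<Longrightarrow> rr (ms ! t) = v t" by simp
    define S where "S = (\<lambda>t. \<Sum>s<t. v s)"
    have Snn: "\<And>t. t \<le> T \<Longrightarrow> 0 \<le> S t" unfolding S_def using v
      by (intro sum_nonneg) auto
    have Sle: "\<And>t. t \<le> T \<Longrightarrow> S t \<le> V" unfolding S_def sv[symmetric]
      by (rule sum_mono2) (use v in auto)
    have pat: "\<And>t. t < T \<Longrightarrow> p_at (mech V) ms t = v t * phi V (S t)"
    proof -
      fix t assume t: "t < T"
      have "(\<Sum>s<t. rr (ms ! s)) = S t" unfolding S_def using eq t by simp
      then show "p_at (mech V) ms t = v t * phi V (S t)"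
        using t by (simp add: p_at_eq q_at_eq[OF V] len eq)
    qed
    have "Psi V (S T) - Psi V (S 0) \<le> (\<Sum>t<T. v t * phi V (S t))"
    proof (rule tele, intro allI impI)
      fix t assume t: "t < T"
      have "S (Suc t) = S t + v t" by (simp add: S_def)
      moreover have "Psi V (S t + v t) - Psi V (S t) \<le> v t * phi V (S t)"
        using Psi_step[OF V Snn[of t, OF less_imp_le[OF t]], of "v t"] v t Sle[of "Suc t"]
        by (simp add: S_def)
      ultimately show "Psi V (S (Suc t)) - Psi V (S t) \<le> v t * phi V (S t)" by simp
    qed
    moreover have "S T = V" "S 0 = 0" using sv by (auto simp: S_def)
    ultimately have "2 * (V / exp 1) - 2 + 1 / exp 1 \<le> (\<Sum>t<T. p_at (mech V) ms t)"
      using Psi_V[OF V] Psi_0[OF V] pat by simp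
    moreover have "reimb (mech V) ms = V / exp 1 + 1"
      using R K_pos[OF V] by (simp add: reimb_eq len)
    moreover have "0 \<le> 1 / exp (1::real)" by simp
    ultimately show ?thesis unfolding revenue_def by linarith
  qed
  show ?thesis using d0 rev by blast
qed

lemma main_zero:
  assumes v: "\<forall>t<T. 0 \<le> v t \<and> v t \<le> 1" and sv: "(\<Sum>t<T. v t) = 0"
  shows "(\<exists>ms. dominant (mech 0) T v ms) \<and>
         (\<forall>ms. dominant (mech 0) T v ms \<longrightarrow> revenue (mech 0) T ms \<ge> 0 / exp 1 - 3)"
proof -
  have "\<forall>t\<in>{..<T}. v t = 0"
    using sv v sum_nonneg_eq_0_iff[of "{..<T}" v] by simp
  then have v0: "\<And>t. t < T \<Longrightarrow> v t = 0" by simp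
  have wf: "well_formed (mech 0)" by (rule wf_mech)
  have p0: "p_at (mech 0) ms t = 0" if "feasible (mech 0) T v ms" "t < T" for ms t
  proof -
    have "p_at (mech 0) ms t \<le> 0" using that v0 by (simp add: feasible_def)
    moreover have "0 \<le> p_at (mech 0) ms t" using wf by (simp add: well_formed_def p_at_def)
    ultimately show ?thesis by simp
  qed
  have ut: "utility (mech 0) T v ms = reimb (mech 0) ms" if "feasible (mech 0) T v ms" for ms
    using p0[OF that] v0 by (simp add: utility_def)
  define ms0 where "ms0 = map v [0..<T]"
  have len0: "length ms0 = T" by (simp add: ms0_def)
  have f0: "feasible (mech 0) T v ms0"
    unfolding feasible_def using len0 v0 by (simp add: p_at_eq ms0_def rr_def)
  have "reimb (mech 0) ms0 = 1" using v0 by (simp add: reimb_eq len0 ms0_def rr_def)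
  moreover have "reimb (mech 0) ms \<le> 1" for ms by (simp add: reimb_eq)
  ultimately have d0: "dominant (mech 0) T v ms0"
    unfolding dominant_def using f0 ut by simp
  have "revenue (mech 0) T ms \<ge> 0 / exp 1 - 3" if "dominant (mech 0) T v ms" for ms
  proof -
    have f: "feasible (mech 0) T v ms" using that by (simp add: dominant_def)
    have "(\<Sum>t<T. p_at (mech 0) ms t) = 0" using p0[OF f] by simp
    moreover have "reimb (mech 0) ms \<le> 1" by (simp add: reimb_eq)
    ultimately show ?thesis by (simp add: revenue_def)
  qed
  then show ?thesis using d0 by blast
qed

theorem theorem17:
  shows "\<exists>C::real. \<forall>(T::nat) (V::real). \<exists>M. well_formed M \<and>
           (\<forall>v::nat \<Rightarrow> real. (\<forall>t<T. 0 \<le> v t \<and> v t \<le> 1) \<and> (\<Sum>t<T. v t) = V \<longrightarrow>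
              (\<exists>ms. dominant M T v ms) \<and>
              (\<forall>ms. dominant M T v ms \<longrightarrow> revenue M T ms \<ge> V / exp 1 - C))"
proof (intro exI allI)
  fix T :: nat and V :: real
  show "well_formed (mech V) \<and>
           (\<forall>v::nat \<Rightarrow> real. (\<forall>t<T. 0 \<le> v t \<and> v t \<le> 1) \<and> (\<Sum>t<T. v t) = V \<longrightarrow>
              (\<exists>ms. dominant (mech V) T v ms) \<and>
              (\<forall>ms. dominant (mech V) T v ms \<longrightarrow> revenue (mech V) T ms \<ge> V / exp 1 - 3))"
  proof -
    have "(\<exists>ms. dominant (mech V) T v ms) \<and>
              (\<forall>ms. dominant (mech V) T v ms \<longrightarrow> revenue (mech V) T ms \<ge> V / exp 1 - 3)"
      if h: "(\<forall>t<T. 0 \<le> v t \<and> v t \<le> 1) \<and> (\<Sum>t<T. v t) = V" for v :: "nat \<Rightarrow> real"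
    proof -
      have "V \<ge> 0" using h by (metis lessThan_iff sum_nonneg)
      show ?thesis
      proof (cases "V = 0")
        case True
        then show ?thesis using main_zero[of T v] h by simp
      next
        case False
        then show ?thesis using main_pos[of V T v] h \<open>V \<ge> 0\<close> by simp
      qed
    qed
    then show ?thesis using wf_mech by blast
  qed
qed

end
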